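(* For any distributions $P,Q,R$ and any $n\geq 1$, if $X_1,\dots,X_n$ are i.i.d. from $R$, then $$\mathrm{Var}\big(\mathrm{T}(P,Q,X^n)\big) \leq \frac{55}{n}\max\big(\mathrm{H}^2(P,R),\,\mathrm{H}^2(Q,R)\big).$$
   Context: Distributions $P,Q,R$ are probability distributions on a measurable space $\mathcal{X}$, identified with their densities with respect to a common $\sigma$-finite reference measure $\mu$ (e.g. Lebesgue measure, or counting measure in the discrete case). All integrals and norms are taken with respect to $\mu$, with $\|U\|_p = (\int |U|^p\, d\mu)^{1/p}$. The Hellinger distance is $\mathrm{H}(P,Q) = \frac{1}{\sqrt{2}}\|\sqrt{P}-\sqrt{Q}\|_2$. For a sample $X^n=(X_1,\dots,X_n)$, the test statistic is $$\mathrm{T}(P,Q,X^n) = \frac{1}{n}\sum_{i=1}^n \frac{P(X_i)-Q(X_i)}{P(X_i)+Q(X_i)},$$ where a summand is interpreted as $0$ whenever $P(X_i)+Q(X_i)=0$. *)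

theory Defs
  imports "HOL-Probability.Probability"
begin

definition is_density :: "'a measure \<Rightarrow> ('a \<Rightarrow> real) \<Rightarrow> bool" where
  "is_density M P \<longleftrightarrow> P \<in> borel_measurable M \<and> (\<forall>x\<in>space M. 0 \<le> P x)
      \<and> integrable M P \<and> (\<integral>x. P x \<partial>M) = 1"

definition hellinger :: "'a measure \<Rightarrow> ('a \<Rightarrow> real) \<Rightarrow> ('a \<Rightarrow> real) \<Rightarrow> real" where
  "hellinger M P Q = (1 / sqrt 2) * sqrt (\<integral>x. (sqrt (P x) - sqrt (Q x))^2 \<partial>M)"

definition tsummand :: "('a \<Rightarrow> real) \<Rightarrow> ('a \<Rightarrow> real) \<Rightarrow> 'a \<Rightarrow> real" where
  "tsummand P Q x = (if P x + Q x = 0 then 0 else (P x - Q x) / (P x + Q x))"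

definition Tstat :: "('a \<Rightarrow> real) \<Rightarrow> ('a \<Rightarrow> real) \<Rightarrow> nat \<Rightarrow> (nat \<Rightarrow> 'a) \<Rightarrow> real" where
  "Tstat P Q n X = (1 / real n) * (\<Sum>i<n. tsummand P Q (X i))"

definition var_of :: "'b measure \<Rightarrow> ('b \<Rightarrow> real) \<Rightarrow> real" where
  "var_of N Y = (\<integral>\<omega>. (Y \<omega> - (\<integral>\<omega>'. Y \<omega>' \<partial>N))^2 \<partial>N)"

definition iid_sample :: "'a measure \<Rightarrow> ('a \<Rightarrow> real) \<Rightarrow> nat \<Rightarrow> (nat \<Rightarrow> 'a) measure" where
  "iid_sample M R n = PiM {..<n} (\<lambda>_. density M (\<lambda>x. ennreal (R x)))"

end

theory Submission
  imports Defs
begin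

lemma alg:
  fixes a b r :: real
  assumes a: "a \<ge> 0" and b: "b \<ge> 0" and r: "r \<ge> 0" and s: "a^2 + b^2 > 0"
  shows "r^2 * ((a^2 - b^2)/(a^2+b^2))^2 \<le> 9 * ((a - r)^2 + (b - r)^2)"
proof -
  define s where "s = a^2+b^2"
  define D where "D = (a - r)^2 + (b - r)^2"
  have sp: "s > 0" using assms s_def by simp
  have e1: "(a^2-b^2)^2 = (a-b)^2*(a+b)^2" by (simp add: power2_eq_square algebra_simps)
  have q1: "0 \<le> (a-b)^2" by simp
  have e2: "(a+b)^2 \<le> 2 * s" using q1 unfolding s_def power2_eq_square by (simp add: algebra_simps)
  have Dp: "0 \<le> D" unfolding D_def by simp
  have k: "r^2 * (a^2-b^2)^2 \<le> 9 * D * s^2"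
  proof (cases "r^2 \<le> 9/4 * s")
    case True
    have q2: "0 \<le> (a+b-2*r)^2" by simp
    have d1: "(a-b)^2 \<le> 2 * D" using q2 unfolding D_def power2_eq_square by (simp add: algebra_simps)
    have "r^2 * (a^2-b^2)^2 \<le> r^2 * ((a-b)^2 * (2 * s))"
      using e1 e2 by (simp add: mult_left_mono)
    also have "\<dots> \<le> (9/4 * s) * ((2 * D)*(2 * s))"
      using True d1 sp Dp by (intro mult_mono) (auto intro: mult_mono)
    finally show ?thesis by (simp add: power2_eq_square algebra_simps)
  next
    case False
    have aa: "0 \<le> a*a" and bb: "0 \<le> b*b" by auto
    have q3: "0 \<le> a*b" using a b by simp
    have ab: "(a-b)^2 \<le> s" using q3 unfolding s_def power2_eq_square by (simp add: algebra_simps)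
    have F: "9*(a^2+b^2) < 4*r^2" using False unfolding s_def by simp
    have sq: "(2/3*r)^2 = 4/9*r^2" by (simp add: power2_eq_square)
    have a2: "0 \<le> a^2" and b2: "0 \<le> b^2" by auto
    have "a^2 \<le> (2/3*r)^2" unfolding sq using F by (simp add: field_simps) (smt (verit) b2)
    hence ar: "a \<le> 2/3*r" by (rule power2_le_imp_le) (use r in simp)
    have "b^2 \<le> (2/3*r)^2" unfolding sq using F by (simp add: field_simps) (smt (verit) a2)
    hence br: "b \<le> 2/3*r" by (rule power2_le_imp_le) (use r in simp)
    have "(r/3)^2 \<le> (r-a)^2" using ar a r by (intro power_mono) auto
    moreover have "(r/3)^2 \<le> (r-b)^2" using br b r by (intro power_mono) auto
    ultimately have Dr: "2*r^2 \<le> 9*D" unfolding D_def by (simp add: power2_eq_square algebra_simps)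
    have "r^2 * (a^2-b^2)^2 \<le> r^2 * ((a-b)^2 * (2 * s))"
      using e1 e2 by (simp add: mult_left_mono)
    also have "\<dots> \<le> r^2 * (s * (2 * s))" using ab sp by (intro mult_left_mono mult_right_mono) auto
    also have "\<dots> = (2*r^2) * s^2" by (simp add: power2_eq_square)
    also have "\<dots> \<le> 9 * D * s^2" using Dr by (intro mult_right_mono) auto
    finally show ?thesis .
  qed
  have "r^2 * ((a^2 - b^2)/(a^2+b^2))^2 = r^2 * (a^2-b^2)^2 / s^2" by (simp add: s_def power_divide)
  also have "\<dots> \<le> 9 * D" using k sp by (simp add: divide_le_eq)
  finally show ?thesis unfolding D_def .
qed

lemma tsummand_bound:
  assumes "P x \<ge> 0" "Q x \<ge> 0"
  shows "\<bar>tsummand P Q x\<bar> \<le> 1"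
  using assms unfolding tsummand_def by (auto simp: abs_divide divide_le_eq_1)

lemma ptwise:
  assumes "P x \<ge> 0" "Q x \<ge> 0" "R x \<ge> 0"
  shows "R x * (tsummand P Q x)^2 \<le> 9 * ((sqrt (P x) - sqrt (R x))^2 + (sqrt (Q x) - sqrt (R x))^2)"
proof (cases "P x + Q x = 0")
  case True
  then show ?thesis unfolding tsummand_def by simp
next
  case False
  have "sqrt (P x)^2 + sqrt (Q x)^2 > 0" using assms False by simp
  from alg[OF real_sqrt_ge_zero real_sqrt_ge_zero real_sqrt_ge_zero this, of "R x"] assms(1,2,3)
  have "sqrt (R x)^2 * ((sqrt (P x)^2 - sqrt (Q x)^2)/(sqrt (P x)^2 + sqrt (Q x)^2))^2
     \<le> 9 * ((sqrt (P x) - sqrt (R x))^2 + (sqrt (Q x) - sqrt (R x))^2)" by simp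
  then show ?thesis using assms False unfolding tsummand_def by simp
qed

lemma sq_diff_int:
  assumes "is_density M P" "is_density M R"
  shows "integrable M (\<lambda>x. (sqrt (P x) - sqrt (R x))^2)"
proof -
  have [measurable]: "P \<in> borel_measurable M" "R \<in> borel_measurable M"
    using assms unfolding is_density_def by auto
  have "integrable M (\<lambda>x. P x + R x)" using assms unfolding is_density_def by auto
  then show ?thesis
  proof (rule Bochner_Integration.integrable_bound)
    show "(\<lambda>x. (sqrt (P x) - sqrt (R x))^2) \<in> borel_measurable M" by measurable
    show "AE x in M. norm ((sqrt (P x) - sqrt (R x))^2) \<le> norm (P x + R x)"
    proof (rule AE_I2)
      fix x assume x: "x \<in> space M"
      then have p: "P x \<ge> 0" and r: "R x \<ge> 0" using assms unfolding is_density_def by auto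
      have z: "0 \<le> sqrt (P x) * sqrt (R x)" using p r by simp
      have e: "(sqrt (P x) - sqrt (R x))^2 = P x + R x - 2 * (sqrt (P x) * sqrt (R x))"
        using p r by (simp add: power2_diff)
      have "(sqrt (P x) - sqrt (R x))^2 \<le> P x + R x" using e z by linarith
      then show "norm ((sqrt (P x) - sqrt (R x))^2) \<le> norm (P x + R x)" using p r by simp
    qed
  qed
qed

lemma prod_int:
  fixes D :: "'a measure" and I S :: "'i set" and h :: "'a \<Rightarrow> real"
  assumes pD: "prob_space D" and fin: "finite I" and S: "S \<subseteq> I" and h: "integrable D h"
  shows "integrable (PiM I (\<lambda>_. D)) (\<lambda>\<omega>. \<Prod>k\<in>S. h (\<omega> k))"
    and "(\<integral>\<omega>. (\<Prod>k\<in>S. h (\<omega> k)) \<partial>PiM I (\<lambda>_. D)) = (\<integral>x. h x \<partial>D)^card S"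
proof -
  interpret pD: prob_space D by fact
  interpret ps: product_sigma_finite "\<lambda>_::'i. D"
    by (simp add: product_sigma_finite_def pD.sigma_finite_measure_axioms)
  define F where "F k = (\<lambda>x. if k \<in> S then h x else 1)" for k
  have Fi: "integrable D (F k)" if "k \<in> I" for k
    unfolding F_def using h by (cases "k \<in> S") (auto simp: pD.integrable_const)
  have eq: "(\<lambda>\<omega>. \<Prod>k\<in>S. h (\<omega> k)) = (\<lambda>\<omega>. \<Prod>k\<in>I. F k (\<omega> k))"
  proof
    fix \<omega> :: "'i \<Rightarrow> 'a"
    have "(\<Prod>k\<in>I \<inter> S. h (\<omega> k)) = (\<Prod>k\<in>I. if k \<in> S then h (\<omega> k) else 1)"
      by (rule prod.inter_restrict[OF fin])
    then show "(\<Prod>k\<in>S. h (\<omega> k)) = (\<Prod>k\<in>I. F k (\<omega> k))"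
      using S unfolding F_def by (simp add: Int_absorb1)
  qed
  show "integrable (PiM I (\<lambda>_. D)) (\<lambda>\<omega>. \<Prod>k\<in>S. h (\<omega> k))"
    unfolding eq by (rule ps.product_integrable_prod[OF fin Fi])
  have "(\<integral>\<omega>. (\<Prod>k\<in>S. h (\<omega> k)) \<partial>PiM I (\<lambda>_. D)) = (\<Prod>k\<in>I. integral\<^sup>L D (F k))"
    unfolding eq by (rule ps.product_integral_prod[OF fin Fi])
  also have "\<dots> = (\<Prod>k\<in>I. if k \<in> S then integral\<^sup>L D h else 1)"
    unfolding F_def by (intro prod.cong) (auto simp: pD.prob_space)
  also have "\<dots> = (\<Prod>k\<in>I \<inter> S. integral\<^sup>L D h)"
    by (rule prod.inter_restrict[OF fin, symmetric])
  also have "\<dots> = (\<integral>x. h x \<partial>D)^card S"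
    using S by (simp add: Int_absorb1)
  finally show "(\<integral>\<omega>. (\<Prod>k\<in>S. h (\<omega> k)) \<partial>PiM I (\<lambda>_. D)) = (\<integral>x. h x \<partial>D)^card S" .
qed

theorem lemma3:
  fixes M :: "'a measure" and P Q R :: "'a \<Rightarrow> real" and n :: nat
  assumes "sigma_finite_measure M"
    and "is_density M P" and "is_density M Q" and "is_density M R"
    and "n \<ge> 1"
  shows "var_of (iid_sample M R n) (Tstat P Q n)
           \<le> 55 / real n * max ((hellinger M P R)^2) ((hellinger M Q R)^2)"
proof -
  have Pm[measurable]: "P \<in> borel_measurable M" and Pnn: "\<And>x. x\<in>space M \<Longrightarrow> 0 \<le> P x"
    using assms(2) unfolding is_density_def by auto
  have Qm[measurable]: "Q \<in> borel_measurable M" and Qnn: "\<And>x. x\<in>space M \<Longrightarrow> 0 \<le> Q x"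
    using assms(3) unfolding is_density_def by auto
  have Rm[measurable]: "R \<in> borel_measurable M" and Rnn: "\<And>x. x\<in>space M \<Longrightarrow> 0 \<le> R x"
    and Ri: "integrable M R" and R1: "(\<integral>x. R x \<partial>M) = 1"
    using assms(4) unfolding is_density_def by auto
  define D where "D = density M (\<lambda>x. ennreal (R x))"
  have sD: "space D = space M" unfolding D_def by simp
  have pD: "prob_space D"
  proof (rule prob_spaceI)
    have "emeasure D (space D) = (\<integral>\<^sup>+x. ennreal (R x) * indicator (space M) x \<partial>M)"
      unfolding D_def by (simp add: emeasure_density)
    also have "\<dots> = (\<integral>\<^sup>+x. ennreal (R x) \<partial>M)" by (intro nn_integral_cong) auto
    also have "\<dots> = ennreal (\<integral>x. R x \<partial>M)"
      by (rule nn_integral_eq_integral) (use Ri Rnn in auto)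
    finally show "emeasure D (space D) = 1" using R1 by simp
  qed
  interpret pD: prob_space D by (rule pD)
  define f where "f = (\<lambda>x. tsummand P Q x)"
  have fm[measurable]: "f \<in> borel_measurable M" unfolding f_def tsummand_def by measurable
  have fmD: "f \<in> borel_measurable D" unfolding D_def using fm by simp
  have fb: "\<bar>f x\<bar> \<le> 1" if "x \<in> space M" for x
    unfolding f_def using tsummand_bound[of P x Q, OF Pnn[OF that] Qnn[OF that]] .
  have fiD: "integrable D f"
  proof (rule pD.integrable_const_bound[where B=1])
    show "AE x in D. norm (f x) \<le> 1"
    proof (rule AE_I2)
      fix x assume "x \<in> space D"
      then show "norm (f x) \<le> 1" using fb sD by simp
    qed
  qed (rule fmD)
  have f2iD: "integrable D (\<lambda>x. (f x)^2)"
  proof (rule pD.integrable_const_bound[where B=1])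
    show "AE x in D. norm ((f x)^2) \<le> 1"
    proof (rule AE_I2)
      fix x assume "x \<in> space D"
      then have "\<bar>f x\<bar> \<le> 1" using fb sD by auto
      then show "norm ((f x)^2) \<le> 1" by (simp add: abs_square_le_1)
    qed
  qed (use fmD in measurable)
  define \<mu> where "\<mu> = (\<integral>x. f x \<partial>D)"
  define g where "g x = f x - \<mu>" for x
  have giD: "integrable D g" unfolding g_def using fiD by auto
  have ggiD: "integrable D (\<lambda>x. g x * g x)"
    unfolding g_def using fiD f2iD by (simp add: algebra_simps power2_eq_square)
  have g0: "(\<integral>x. g x \<partial>D) = 0" unfolding g_def \<mu>_def using fiD by (simp add: pD.prob_space)
  define V where "V = (\<integral>x. g x * g x \<partial>D)"
  have VE: "V \<le> (\<integral>x. (f x)^2 \<partial>D)"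
  proof -
    have "V = pD.variance f" unfolding V_def g_def \<mu>_def by (simp add: power2_eq_square)
    also have "\<dots> = (\<integral>x. (f x)^2 \<partial>D) - \<mu>^2" unfolding \<mu>_def
      by (rule pD.variance_eq[OF fiD f2iD])
    finally show ?thesis by simp
  qed
  define \<Omega> where "\<Omega> = PiM {..<n} (\<lambda>_. D)"
  have \<Omega>eq: "iid_sample M R n = \<Omega>" unfolding iid_sample_def \<Omega>_def D_def ..
  interpret p\<Omega>: prob_space \<Omega> unfolding \<Omega>_def by (intro prob_space_PiM pD)
  have npos: "real n > 0" using assms(5) by simp
  have Tg: "Tstat P Q n \<omega> = \<mu> + (1 / real n) * (\<Sum>i<n. g (\<omega> i))" for \<omega>
  proof -
    have "(\<Sum>i<n. g (\<omega> i)) = (\<Sum>i<n. f (\<omega> i)) - real n * \<mu>"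
      unfolding g_def by (simp add: sum_subtractf)
    then show ?thesis unfolding Tstat_def f_def using npos by (simp add: field_simps)
  qed
  have gi: "integrable \<Omega> (\<lambda>\<omega>. g (\<omega> i))" and gi0: "(\<integral>\<omega>. g (\<omega> i) \<partial>\<Omega>) = 0" if "i < n" for i
  proof -
    have "{i} \<subseteq> {..<n}" using that by auto
    note L = prod_int[OF pD finite_lessThan this giD]
    show "integrable \<Omega> (\<lambda>\<omega>. g (\<omega> i))" using L(1) unfolding \<Omega>_def by simp
    show "(\<integral>\<omega>. g (\<omega> i) \<partial>\<Omega>) = 0" using L(2) g0 unfolding \<Omega>_def by simp
  qed
  have gij: "integrable \<Omega> (\<lambda>\<omega>. g (\<omega> i) * g (\<omega> j)) \<and>
       (\<integral>\<omega>. g (\<omega> i) * g (\<omega> j) \<partial>\<Omega>) = (if i = j then V else 0)"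
    if "i < n" "j < n" for i j
  proof (cases "i = j")
    case True
    have "{i} \<subseteq> {..<n}" using that by auto
    note L = prod_int[OF pD finite_lessThan this ggiD]
    show ?thesis using L True unfolding \<Omega>_def V_def by simp
  next
    case False
    have "{i, j} \<subseteq> {..<n}" using that by auto
    note L = prod_int[OF pD finite_lessThan this giD]
    show ?thesis using L False g0 unfolding \<Omega>_def by simp
  qed
  have gij0: "(\<integral>\<omega>. g (\<omega> i) * g (\<omega> j) \<partial>\<Omega>) = (if i = j then V else 0)"
    if "i < n" "j < n" for i j using gij[OF that] by blast
  have mean: "(\<integral>\<omega>. Tstat P Q n \<omega> \<partial>\<Omega>) = \<mu>"
  proof -
    have si: "integrable \<Omega> (\<lambda>\<omega>. \<Sum>i<n. g (\<omega> i))" using gi by auto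
    have "(\<integral>\<omega>. Tstat P Q n \<omega> \<partial>\<Omega>) = (\<integral>\<omega>. \<mu> + (1 / real n) * (\<Sum>i<n. g (\<omega> i)) \<partial>\<Omega>)"
      by (simp add: Tg)
    also have "\<dots> = \<mu> + (1 / real n) * (\<integral>\<omega>. (\<Sum>i<n. g (\<omega> i)) \<partial>\<Omega>)"
      using si by (simp add: p\<Omega>.prob_space)
    also have "(\<integral>\<omega>. (\<Sum>i<n. g (\<omega> i)) \<partial>\<Omega>) = (\<Sum>i<n. (\<integral>\<omega>. g (\<omega> i) \<partial>\<Omega>))"
      by (rule Bochner_Integration.integral_sum) (simp add: gi)
    also have "\<dots> = 0" using gi0 by simp
    finally show ?thesis by simp
  qed
  have var: "var_of \<Omega> (Tstat P Q n) = V / real n"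
  proof -
    have sq: "(Tstat P Q n \<omega> - \<mu>)^2 = (1 / real n)^2 * (\<Sum>i<n. \<Sum>j<n. g (\<omega> i) * g (\<omega> j))" for \<omega>
      unfolding Tg by (simp add: power2_eq_square sum_product power_mult_distrib)
    have ii: "integrable \<Omega> (\<lambda>\<omega>. g (\<omega> i) * g (\<omega> j))" if "i \<in> {..<n}" "j \<in> {..<n}" for i j
      using gij that by blast
    have iis: "integrable \<Omega> (\<lambda>\<omega>. \<Sum>i<n. \<Sum>j<n. g (\<omega> i) * g (\<omega> j))"
      by (intro Bochner_Integration.integrable_sum ii)
    have "var_of \<Omega> (Tstat P Q n) = (\<integral>\<omega>. (1 / real n)^2 * (\<Sum>i<n. \<Sum>j<n. g (\<omega> i) * g (\<omega> j)) \<partial>\<Omega>)"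
      unfolding var_of_def mean sq ..
    also have "\<dots> = (1 / real n)^2 * (\<integral>\<omega>. (\<Sum>i<n. \<Sum>j<n. g (\<omega> i) * g (\<omega> j)) \<partial>\<Omega>)"
      by (rule Bochner_Integration.integral_mult_right) (rule iis)
    also have "(\<integral>\<omega>. (\<Sum>i<n. \<Sum>j<n. g (\<omega> i) * g (\<omega> j)) \<partial>\<Omega>)
        = (\<Sum>i<n. (\<integral>\<omega>. (\<Sum>j<n. g (\<omega> i) * g (\<omega> j)) \<partial>\<Omega>))"
      by (rule Bochner_Integration.integral_sum) (auto intro!: Bochner_Integration.integrable_sum ii)
    also have "\<dots> = (\<Sum>i<n. \<Sum>j<n. (\<integral>\<omega>. g (\<omega> i) * g (\<omega> j) \<partial>\<Omega>))"
      by (intro sum.cong refl Bochner_Integration.integral_sum) (auto intro: ii)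
    also have "\<dots> = (\<Sum>i<n. \<Sum>j<n. (if i = j then V else 0))"
      using gij0 by (intro sum.cong) auto
    also have "\<dots> = real n * V" by simp
    finally show ?thesis using npos by (simp add: power2_eq_square field_simps)
  qed
  define A where "A = (\<integral>x. (sqrt (P x) - sqrt (R x))^2 \<partial>M)"
  define B where "B = (\<integral>x. (sqrt (Q x) - sqrt (R x))^2 \<partial>M)"
  have Ai: "integrable M (\<lambda>x. (sqrt (P x) - sqrt (R x))^2)" by (rule sq_diff_int[OF assms(2,4)])
  have Bi: "integrable M (\<lambda>x. (sqrt (Q x) - sqrt (R x))^2)" by (rule sq_diff_int[OF assms(3,4)])
  have A0: "A \<ge> 0" unfolding A_def by simp
  have B0: "B \<ge> 0" unfolding B_def by simp
  have HA: "(hellinger M P R)^2 = A / 2" unfolding hellinger_def A_def[symmetric]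
    using A0 by (simp add: power_mult_distrib power_divide)
  have HB: "(hellinger M Q R)^2 = B / 2" unfolding hellinger_def B_def[symmetric]
    using B0 by (simp add: power_mult_distrib power_divide)
  have EF: "(\<integral>x. (f x)^2 \<partial>D) \<le> 9 * (A + B)"
  proof -
    have "(\<integral>x. (f x)^2 \<partial>D) = (\<integral>x. R x * (f x)^2 \<partial>M)"
      unfolding D_def by (subst integral_density) (use Rnn in auto)
    also have "\<dots> \<le> (\<integral>x. 9 * ((sqrt (P x) - sqrt (R x))^2 + (sqrt (Q x) - sqrt (R x))^2) \<partial>M)"
    proof (rule Bochner_Integration.integral_mono)
      have "integrable D (\<lambda>x. (f x)^2)" by (rule f2iD)
      then show "integrable M (\<lambda>x. R x * (f x)^2)"
        unfolding D_def by (subst (asm) integrable_density) (use Rnn in auto)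
      show "integrable M (\<lambda>x. 9 * ((sqrt (P x) - sqrt (R x))^2 + (sqrt (Q x) - sqrt (R x))^2))"
        using Ai Bi by auto
      fix x assume x: "x \<in> space M"
      show "R x * (f x)^2 \<le> 9 * ((sqrt (P x) - sqrt (R x))^2 + (sqrt (Q x) - sqrt (R x))^2)"
        unfolding f_def by (rule ptwise[of P x Q R, OF Pnn[OF x] Qnn[OF x] Rnn[OF x]])
    qed
    also have "\<dots> = 9 * (A + B)" unfolding A_def B_def using Ai Bi by simp
    finally show ?thesis .
  qed
  have "var_of (iid_sample M R n) (Tstat P Q n) = V / real n" using var \<Omega>eq by simp
  also have "\<dots> \<le> (9 * (A + B)) / real n" using VE EF npos by (simp add: divide_right_mono)
  also have "\<dots> \<le> 55 / real n * max ((hellinger M P R)^2) ((hellinger M Q R)^2)"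
  proof -
    have "9 * (A + B) \<le> 55 * max (A/2) (B/2)" using A0 B0 by (simp add: max_def)
    then show ?thesis unfolding HA HB using npos by (simp add: divide_right_mono)
  qed
  finally show ?thesis .
qed
end
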